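(* Let $\mathcal{A}\subseteq M_n(\mathbb{C})$ be logmodular. Then there are complex numbers $\alpha_{ij},\beta_{ij}$, $i,j\in\{1,\dots,n\}$, such that every row of the matrix $[\alpha_{ij}]$ is non-zero, every column of the matrix $[\beta_{ij}]$ is non-zero, and for every $i,j\in\{1,\dots,n\}$ $$\sum_{k=1}^n \alpha_{ik}E_{i,k}\in\mathcal{A},\qquad \sum_{k=1}^n \beta_{kj}E_{k,j}\in\mathcal{A}.$$
   Context: $E_{i,j}$ denote the matrix units of $M_n(\mathbb{C})$. A unital subalgebra $\mathcal{A}\subseteq M_n(\mathbb{C})$ (containing the identity $1_n$) is called logmodular (in $M_n(\mathbb{C})$) if the set $\{a^*a : a\in\mathcal{A}^{-1}\}$ is dense in the set of positive invertible matrices in $M_n(\mathbb{C})$, where $\mathcal{A}^{-1}$ denotes the set of elements of $\mathcal{A}$ invertible in $\mathcal{A}$. *)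

theory Defs
  imports "HOL-Analysis.Analysis"
begin

text \<open>Matrices in M_n(C) are rendered as complex^'n^'n, with n = CARD('n).\<close>

definition cscale :: "complex \<Rightarrow> complex^'n^'n \<Rightarrow> complex^'n^'n" where
  "cscale c M = (\<chi> a b. c * M $ a $ b)"

definition matrix_unit :: "'n::finite \<Rightarrow> 'n \<Rightarrow> complex^'n^'n" where
  "matrix_unit i j = (\<chi> a b. if a = i \<and> b = j then 1 else 0)"

definition cadj :: "complex^'n^'n \<Rightarrow> complex^'n^'n" where
  "cadj M = (\<chi> a b. cnj (M $ b $ a))"

definition unital_subalgebra :: "(complex^'n::finite^'n) set \<Rightarrow> bool" where
  "unital_subalgebra A \<longleftrightarrow>
     mat 1 \<in> A \<and> 0 \<in> A \<and>
     (\<forall>a\<in>A. \<forall>b\<in>A. a + b \<in> A) \<and>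
     (\<forall>c. \<forall>a\<in>A. cscale c a \<in> A) \<and>
     (\<forall>a\<in>A. \<forall>b\<in>A. a ** b \<in> A)"

definition inv_in :: "(complex^'n::finite^'n) set \<Rightarrow> (complex^'n^'n) set" where
  "inv_in A = {a \<in> A. \<exists>b\<in>A. a ** b = mat 1 \<and> b ** a = mat 1}"

definition positive_mat :: "complex^'n::finite^'n \<Rightarrow> bool" where
  "positive_mat M \<longleftrightarrow> cadj M = M \<and>
     (\<forall>x :: complex^'n. let q = (\<Sum>i\<in>UNIV. cnj (x $ i) * (M *v x) $ i)
                          in Im q = 0 \<and> Re q \<ge> 0)"

definition pos_invertible :: "(complex^'n::finite^'n) set" where
  "pos_invertible = {M. positive_mat M \<and> invertible M}"

definition logmodular :: "(complex^'n::finite^'n) set \<Rightarrow> bool" where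
  "logmodular A \<longleftrightarrow> unital_subalgebra A \<and>
     pos_invertible \<subseteq> closure {cadj a ** a | a. a \<in> inv_in A}"

end

theory Submission
  imports Defs
begin


lemma cnj_mult_self: "cnj z * z = complex_of_real ((cmod z)^2)"
  using complex_norm_square[of z] by (simp add: mult.commute)
lemma delta_sum2: "(\<Sum>l\<in>(UNIV::'a::finite set). f l * (if l = r then 1 else 0)) = (f r::complex)"
  by (simp add: if_distrib cong: if_cong)
lemma delta_sum1: "(\<Sum>l\<in>(UNIV::'a::finite set). (if r = l then 1 else 0) * f l) = (f r::complex)"
proof -
  have "(\<Sum>l\<in>(UNIV::'a::finite set). (if r = l then 1 else 0) * f l) = (\<Sum>l\<in>(UNIV::'a::finite set). f l * (if l = r then 1 else 0))"
    by (rule sum.cong) auto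
  then show ?thesis using delta_sum2 by simp
qed

definition cn :: "complex^'n::finite^'n \<Rightarrow> 'n \<Rightarrow> real" where
  "cn c k = (\<Sum>r\<in>UNIV. (cmod (c$r$k))^2)"
definition rn :: "complex^'n::finite^'n \<Rightarrow> 'n \<Rightarrow> real" where
  "rn c k = (\<Sum>l\<in>UNIV. (cmod (c$k$l))^2)"

lemma cont_cn: "continuous_on S (\<lambda>c::complex^'n::finite^'n. cn c k)"
  unfolding cn_def by (intro continuous_intros continuous_on_component continuous_on_id)

lemma cont_rn: "continuous_on S (\<lambda>c::complex^'n::finite^'n. rn c k)"
  unfolding rn_def by (intro continuous_intros continuous_on_component continuous_on_id)

lemma entry_le_cn: "(cmod (c$r$k))^2 \<le> cn c k"
  unfolding cn_def by (rule member_le_sum) auto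

lemma entry_le_rn: "(cmod (c$k$l))^2 \<le> rn c k"
  unfolding rn_def by (rule member_le_sum) auto

lemma cn_nonneg: "cn c k \<ge> 0" unfolding cn_def by (simp add: sum_nonneg)
lemma rn_nonneg: "rn c k \<ge> 0" unfolding rn_def by (simp add: sum_nonneg)

lemma norm_vec_le_sum: "norm (x::'a::real_normed_vector^'m::finite) \<le> (\<Sum>i\<in>UNIV. norm (x$i))"
  unfolding norm_vec_def by (rule L2_set_le_sum) auto

lemma norm_mat_bound:
  fixes c :: "complex^'n::finite^'n"
  assumes "\<And>r s. cmod (c$r$s) \<le> 2"
  shows "norm c \<le> 2 * real CARD('n) * real CARD('n)"
proof -
  have "norm c \<le> (\<Sum>r\<in>UNIV. norm (c$r))" by (rule norm_vec_le_sum)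
  also have "\<dots> \<le> (\<Sum>r\<in>(UNIV::'n set). (\<Sum>s\<in>(UNIV::'n set). 2))"
  proof (rule sum_mono)
    fix r
    have "norm (c$r) \<le> (\<Sum>s\<in>UNIV. norm (c$r$s))" by (rule norm_vec_le_sum)
    also have "\<dots> \<le> (\<Sum>s\<in>(UNIV::'n set). 2)" by (rule sum_mono) (use assms in auto)
    finally show "norm (c$r) \<le> (\<Sum>s\<in>(UNIV::'n set). 2)" .
  qed
  finally show ?thesis by simp
qed

lemma sq_le4: "(x::real) \<ge> 0 \<Longrightarrow> x^2 \<le> 4 \<Longrightarrow> x \<le> 2"
  using power2_le_imp_le[of x 2] by simp

lemma subspace_A: assumes "unital_subalgebra A" shows "subspace A"
proof -
  have "c *\<^sub>R x = cscale (of_real c :: complex) x" for c x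
    by (simp add: cscale_def vec_eq_iff) (simp add: scaleR_conv_of_real)
  then show ?thesis using assms unfolding unital_subalgebra_def subspace_def by metis
qed

lemma limit_arg:
  fixes A :: "(complex^'n::finite^'n) set" and g h :: "complex^'n^'n \<Rightarrow> real"
  assumes "closed A" "continuous_on UNIV g" "continuous_on UNIV h" "\<And>c. g c \<ge> 0"
    "\<And>e. e > 0 \<Longrightarrow> \<exists>c\<in>A. norm c \<le> R \<and> g c \<le> e \<and> h c \<ge> \<eta>"
  shows "\<exists>c\<in>A. g c = 0 \<and> h c \<ge> \<eta>"
proof -
  define K where "K = cball 0 R \<inter> (A \<inter> {c. \<eta> \<le> h c})"
  have "closed {c. \<eta> \<le> h c}"
    by (rule closed_Collect_le) (use assms(3) in auto)
  then have "compact K" unfolding K_def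
    by (intro compact_Int_closed compact_cball closed_Int assms(1))
  moreover have "K \<noteq> {}" using assms(5)[of 1] unfolding K_def by auto
  moreover have "continuous_on K g" using assms(2) continuous_on_subset by blast
  ultimately obtain c0 where c0: "c0 \<in> K" "\<forall>y\<in>K. g c0 \<le> g y"
    using continuous_attains_inf by blast
  have "g c0 \<le> e" if epos: "e > 0" for e
  proof -
    obtain c where "c \<in> A" "norm c \<le> R" "g c \<le> e" "h c \<ge> \<eta>" using assms(5)[OF epos] by blast
    then have "c \<in> K" unfolding K_def by auto
    then show ?thesis using c0 \<open>g c \<le> e\<close> by force
  qed
  then have "g c0 \<le> 0" by (meson dense not_le)
  with assms(4)[of c0] have "g c0 = 0" by linarith
  then show ?thesis using c0 unfolding K_def by auto
qed



lemma gram_diag: "(cadj a ** a)$k$k = of_real (cn a k)"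
  by (simp add: matrix_matrix_mult_def cadj_def cn_def of_real_sum cnj_mult_self)

lemma amgm: "(u::real) * v \<le> (u^2 + v^2)/2"
  using sum_squares_bound[of u v] by (simp add: field_simps power2_eq_square)

lemma amgm4: "(u::real) * v \<le> u^2/4 + v^2"
proof -
  have "0 \<le> (u/2 - v)^2" by simp
  then show ?thesis by (simp add: power2_eq_square field_simps)
qed

lemma row_est:
  fixes a b :: "complex^'n::finite^'n" and p :: "'n \<Rightarrow> real"
  assumes ab: "a ** b = mat 1" and ba: "b ** a = mat 1"
   and close: "\<forall>m m'. cmod ((cadj a ** a)$m$m' - (if m = m' then of_real (p m) else 0)) \<le> \<delta>"
   and p1: "\<forall>m. p m \<ge> 1" and dl: "\<delta> * real CARD('n) \<le> 1/2"
  shows "rn b k \<le> 2 \<and> p k * (rn b k)^2 \<le> 4 \<and> (p k = 1 \<longrightarrow> rn b k \<ge> 1/2)"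
proof -
  define x where "x l = cnj (b$k$l)" for l
  define y where "y m = (\<Sum>l\<in>UNIV. b$m$l * x l)" for m
  define G where "G = cadj a ** a"
  have G: "G$m$m' = (\<Sum>l\<in>UNIV. cnj(a$l$m) * a$l$m')" for m m'
    by (simp add: G_def matrix_matrix_mult_def cadj_def)
  have abe: "(\<Sum>m\<in>UNIV. a$r$m * b$m$l) = (if r = l then 1 else 0)" for r l
    using arg_cong[OF ab, of "\<lambda>M. M$r$l"] by (simp add: matrix_matrix_mult_def mat_def)
  have bae: "(\<Sum>l\<in>UNIV. b$k$l * a$l$m) = (if k = m then 1 else 0)" for m
    using arg_cong[OF ba, of "\<lambda>M. M$k$m"] by (simp add: matrix_matrix_mult_def mat_def)
  have F1: "(\<Sum>m\<in>UNIV. a$r$m * y m) = x r" for r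
  proof -
    have "(\<Sum>m\<in>UNIV. a$r$m * y m) = (\<Sum>m\<in>UNIV. \<Sum>l\<in>UNIV. a$r$m * b$m$l * x l)"
      by (simp add: y_def sum_distrib_left mult.assoc)
    also have "\<dots> = (\<Sum>l\<in>UNIV. \<Sum>m\<in>UNIV. a$r$m * b$m$l * x l)" by (rule sum.swap)
    also have "\<dots> = (\<Sum>l\<in>UNIV. (\<Sum>m\<in>UNIV. a$r$m * b$m$l) * x l)"
      by (simp add: sum_distrib_right)
    also have "\<dots> = x r" by (simp add: abe delta_sum1)
    finally show ?thesis .
  qed
  have F2: "(\<Sum>l\<in>UNIV. cnj(a$l$m) * x l) = (if m = k then 1 else 0)" for m
  proof -
    have "(\<Sum>l\<in>UNIV. cnj(a$l$m) * x l) = cnj (\<Sum>l\<in>UNIV. b$k$l * a$l$m)"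
      by (simp add: x_def mult.commute)
    then show ?thesis by (simp add: bae)
  qed
  define r where "r = rn b k"
  have rX: "of_real r = (\<Sum>l\<in>UNIV. cnj(x l) * x l)"
    unfolding r_def rn_def of_real_sum x_def
    by (rule sum.cong[OF refl]) (simp only: complex_norm_square complex_cnj_cnj)
  have F4: "(\<Sum>l\<in>UNIV. cnj(x l) * x l) = cnj (y k)"
  proof -
    have "(\<Sum>l\<in>UNIV. cnj(x l) * x l) = (\<Sum>l\<in>UNIV. \<Sum>m\<in>UNIV. cnj (y m) * (cnj(a$l$m) * x l))"
    proof (rule sum.cong[OF refl])
      fix l
      have "cnj (x l) = (\<Sum>m\<in>UNIV. cnj(a$l$m) * cnj (y m))"
        using arg_cong[OF F1[of l], of cnj] by simp
      then show "cnj(x l) * x l = (\<Sum>m\<in>UNIV. cnj (y m) * (cnj(a$l$m) * x l))"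
        by (simp add: sum_distrib_right sum_distrib_left mult_ac)
    qed
    also have "\<dots> = (\<Sum>m\<in>UNIV. \<Sum>l\<in>UNIV. cnj (y m) * (cnj(a$l$m) * x l))" by (rule sum.swap)
    also have "\<dots> = (\<Sum>m\<in>UNIV. cnj (y m) * (if m = k then 1 else 0))"
      by (simp add: sum_distrib_left[symmetric] F2)
    also have "\<dots> = cnj (y k)" by (simp add: if_distrib cong: if_cong)
    finally show ?thesis .
  qed
  have F5: "(\<Sum>l\<in>UNIV. cnj(x l) * x l) = (\<Sum>m\<in>UNIV. \<Sum>m'\<in>UNIV. cnj (y m) * G$m$m' * y m')"
  proof -
    have "(\<Sum>l\<in>UNIV. cnj(x l) * x l) = (\<Sum>l\<in>UNIV. \<Sum>m\<in>UNIV. \<Sum>m'\<in>UNIV. cnj (y m) * (cnj(a$l$m) * a$l$m') * y m')"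
    proof (rule sum.cong[OF refl])
      fix l
      have c: "cnj (x l) = (\<Sum>m\<in>UNIV. cnj (y m) * cnj(a$l$m))"
        using arg_cong[OF F1[of l], of cnj] by (simp add: mult.commute)
      have "cnj (x l) * x l = (\<Sum>m\<in>UNIV. cnj (y m) * cnj(a$l$m)) * (\<Sum>m'\<in>UNIV. a$l$m' * y m')"
        by (simp only: c F1)
      also have "\<dots> = (\<Sum>m\<in>UNIV. \<Sum>m'\<in>UNIV. (cnj (y m) * cnj(a$l$m)) * (a$l$m' * y m'))"
        by (rule sum_product)
      finally show "cnj (x l) * x l = (\<Sum>m\<in>UNIV. \<Sum>m'\<in>UNIV. cnj (y m) * (cnj(a$l$m) * a$l$m') * y m')"
        by (simp add: mult_ac)
    qed
    also have "\<dots> = (\<Sum>m\<in>UNIV. \<Sum>l\<in>UNIV. \<Sum>m'\<in>UNIV. cnj (y m) * (cnj(a$l$m) * a$l$m') * y m')"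
      by (rule sum.swap)
    also have "\<dots> = (\<Sum>m\<in>UNIV. \<Sum>m'\<in>UNIV. \<Sum>l\<in>UNIV. cnj (y m) * (cnj(a$l$m) * a$l$m') * y m')"
      by (rule sum.cong[OF refl], rule sum.swap)
    also have "\<dots> = (\<Sum>m\<in>UNIV. \<Sum>m'\<in>UNIV. cnj (y m) * G$m$m' * y m')"
      by (simp add: G sum_distrib_left sum_distrib_right)
    finally show ?thesis .
  qed
  define D where "D m m' = G$m$m' - (if m = m' then of_real (p m) else 0)" for m m'
  have Dle: "cmod (D m m') \<le> \<delta>" for m m' using close by (simp add: D_def G_def)
  have d0: "\<delta> \<ge> 0" using Dle[of k k] norm_ge_zero order_trans by blast
  define E where "E = (\<Sum>m\<in>UNIV. \<Sum>m'\<in>UNIV. cnj (y m) * D m m' * y m')"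
  define Y where "Y = (\<Sum>m\<in>UNIV. (cmod (y m))^2)"
  define S where "S = (\<Sum>m\<in>UNIV. p m * (cmod (y m))^2)"
  have dec: "(\<Sum>m\<in>UNIV. \<Sum>m'\<in>UNIV. cnj (y m) * G$m$m' * y m') = of_real S + E"
  proof -
    have "(\<Sum>m\<in>UNIV. \<Sum>m'\<in>UNIV. cnj (y m) * G$m$m' * y m') =
      (\<Sum>m\<in>UNIV. \<Sum>m'\<in>UNIV. cnj (y m) * (if m = m' then of_real (p m) else 0) * y m') + E"
      by (simp add: E_def D_def algebra_simps sum.distrib[symmetric] sum_subtractf)
    also have "(\<Sum>m\<in>UNIV. \<Sum>m'\<in>UNIV. cnj (y m) * (if m = m' then of_real (p m) else 0) * y m')
       = (\<Sum>m\<in>UNIV. cnj (y m) * of_real (p m) * y m)"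
    proof (rule sum.cong[OF refl])
      fix m
      have "(\<Sum>m'\<in>UNIV. cnj (y m) * (if m = m' then of_real (p m) else 0) * y m')
          = (\<Sum>m'\<in>UNIV. if m = m' then cnj (y m) * of_real (p m) * y m else 0)"
        by (rule sum.cong) auto
      then show "(\<Sum>m'\<in>UNIV. cnj (y m) * (if m = m' then of_real (p m) else 0) * y m')
          = cnj (y m) * of_real (p m) * y m" by simp
    qed
    also have "\<dots> = of_real S"
      unfolding S_def of_real_sum
      by (rule sum.cong[OF refl]) (simp add: cnj_mult_self del: of_real_power)
    finally show ?thesis .
  qed
  have nE: "cmod E \<le> \<delta> * real CARD('n) * Y"
  proof -
    have "cmod E \<le> (\<Sum>m\<in>UNIV. \<Sum>m'\<in>UNIV. cmod (cnj (y m) * D m m' * y m'))"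
      unfolding E_def by (rule order_trans[OF norm_sum sum_mono[OF norm_sum]])
    also have "\<dots> \<le> (\<Sum>m\<in>UNIV. \<Sum>m'\<in>UNIV. \<delta> * ((cmod (y m))^2 + (cmod (y m'))^2)/2)"
    proof (intro sum_mono)
      fix m m'
      have "cmod (cnj (y m) * D m m' * y m') = cmod (D m m') * (cmod (y m) * cmod (y m'))"
        by (simp add: norm_mult)
      also have "\<dots> \<le> \<delta> * ((cmod (y m))^2 + (cmod (y m'))^2)/2"
        using mult_mono[OF Dle[of m m'] amgm[of "cmod (y m)" "cmod (y m')"]] d0 by simp
      finally show "cmod (cnj (y m) * D m m' * y m') \<le> \<delta> * ((cmod (y m))^2 + (cmod (y m'))^2)/2" .
    qed
    also have "\<dots> = \<delta> * real CARD('n) * Y"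
      by (simp add: Y_def sum.distrib add_divide_distrib sum_divide_distrib[symmetric]
          sum_distrib_left[symmetric] algebra_simps)
    finally show ?thesis .
  qed
  have rS: "r = S + Re E" using rX F5 dec by (metis Re_complex_of_real plus_complex.sel(1))
  have ryk: "of_real r = cnj (y k)" using rX F4 by simp
  have r0: "r \<ge> 0" by (simp add: r_def rn_nonneg)
  have ry: "r = cmod (y k)"
    using arg_cong[OF ryk, of cmod] r0 by simp
  have Y0: "Y \<ge> 0" by (simp add: Y_def sum_nonneg)
  have ykY: "(cmod (y k))^2 \<le> Y" unfolding Y_def by (rule member_le_sum) auto
  have SY: "Y \<le> S" unfolding Y_def S_def
  proof (rule sum_mono)
    fix m
    show "(cmod (y m))^2 \<le> p m * (cmod (y m))^2"
      using mult_right_mono[OF p1[rule_format, of m] zero_le_power2[of "cmod (y m)"]] by simp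
  qed
  have Sk: "p k * (cmod (y k))^2 \<le> S" unfolding S_def
    by (rule member_le_sum) (use p1 in \<open>auto intro!: mult_nonneg_nonneg simp: order_trans[OF zero_le_one]\<close>)
  have ReE: "\<bar>Re E\<bar> \<le> Y/2"
  proof -
    have "\<bar>Re E\<bar> \<le> cmod E" by (rule abs_Re_le_cmod)
    also have "\<dots> \<le> \<delta> * real CARD('n) * Y" by (rule nE)
    also have "\<dots> \<le> Y/2" using mult_right_mono[OF dl Y0] by simp
    finally show ?thesis .
  qed
  have r2: "r^2 \<le> Y" using ry ykY by simp
  have rY: "Y \<le> 2 * r" using rS ReE SY by linarith
  have rle: "r \<le> 2"
  proof -
    have "r * r \<le> 2 * r" using r2 rY by (simp add: power2_eq_square)
    then show ?thesis using r0 by (cases "r = 0") (auto simp: mult_le_cancel_right)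
  qed
  have p4: "p k * r^2 \<le> 4" using Sk ry rS ReE rY rle by simp
  have low: "r \<ge> 1/2" if pk: "p k = 1"
  proof -
    have dl2: "\<delta> \<le> 1/2"
    proof -
      have "real CARD('n) \<ge> 1" by simp
      moreover have "\<delta> \<ge> 0" using Dle[of k k] norm_ge_zero order_trans by blast
      ultimately have "\<delta> * 1 \<le> \<delta> * real CARD('n)" by (intro mult_left_mono) auto
      then show ?thesis using dl by simp
    qed
    have "cmod (G$k$k - 1) \<le> \<delta>" using close[rule_format, of k k] pk by (simp add: G_def)
    moreover have "cn a k - 1 \<le> cmod (G$k$k - 1)"
      using abs_Re_le_cmod[of "G$k$k - 1"] by (simp add: G_def gram_diag)
    ultimately have cnk: "cn a k \<le> 3/2" using dl2 by linarith
    have "1 = cmod (\<Sum>l\<in>UNIV. cnj(a$l$k) * x l)" using F2[of k] by simp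
    also have "\<dots> \<le> (\<Sum>l\<in>UNIV. cmod (a$l$k) * cmod (x l))"
      using norm_sum[of "\<lambda>l. cnj(a$l$k) * x l" UNIV] by (simp add: norm_mult)
    also have "\<dots> \<le> (\<Sum>l\<in>UNIV. (cmod (a$l$k))^2/4 + (cmod (x l))^2)"
      by (rule sum_mono) (rule amgm4)
    also have "\<dots> = cn a k / 4 + r"
      by (simp add: sum.distrib cn_def r_def rn_def x_def sum_divide_distrib)
    finally show ?thesis using cnk by linarith
  qed
  show ?thesis using rle p4 low by (simp add: r_def)
qed



definition dg :: "('n::finite \<Rightarrow> real) \<Rightarrow> complex^'n^'n" where
  "dg p = (\<chi> a b. if a = b then complex_of_real (p a) else 0)"

lemma dg_mult: "dg p ** dg q = dg (\<lambda>m. p m * q m)"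
proof -
  have "(\<Sum>k\<in>UNIV. (if i = k then complex_of_real (p i) else 0) * (if k = j then complex_of_real (q k) else 0))
      = (if i = j then complex_of_real (p i * q i) else 0)" for i j
  proof -
    have "(\<Sum>k\<in>UNIV. (if i = k then complex_of_real (p i) else 0) * (if k = j then complex_of_real (q k) else 0))
       = (\<Sum>k\<in>UNIV. if k = i then (if i = j then complex_of_real (p i * q i) else 0) else 0)"
      by (rule sum.cong) auto
    then show ?thesis by simp
  qed
  then show ?thesis by (simp add: dg_def matrix_matrix_mult_def vec_eq_iff)
qed

lemma dg_posinv: fixes p :: "'n::finite \<Rightarrow> real" assumes "\<And>m. p m > 0" shows "dg p \<in> pos_invertible"
proof -
  have adj0: "cadj (dg p) $ a $ b = dg p $ a $ b" for a b
    unfolding cadj_def dg_def by (simp only: vec_lambda_beta) (cases "a = b", simp_all)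
  have adj: "cadj (dg p) = dg p" using adj0 by (simp add: vec_eq_iff)
  have mv: "(dg p *v x)$i = complex_of_real (p i) * x$i" for x i
  proof -
    have "(dg p *v x)$i = (\<Sum>j\<in>UNIV. (if i = j then complex_of_real (p i) else 0) * x$j)"
      by (simp add: dg_def matrix_vector_mult_def)
    also have "\<dots> = (\<Sum>j\<in>UNIV. if j = i then complex_of_real (p i) * x$i else 0)"
      by (rule sum.cong) auto
    finally show ?thesis by simp
  qed
  have q: "(\<Sum>i\<in>UNIV. cnj (x $ i) * (dg p *v x) $ i) = complex_of_real (\<Sum>i\<in>UNIV. p i * (cmod (x$i))^2)" for x :: "complex^'n"
    unfolding of_real_sum
    by (rule sum.cong[OF refl]) (simp add: mv complex_norm_square[symmetric] mult_ac del: of_real_power)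
  have nn: "(\<Sum>i\<in>UNIV. p i * (cmod (x$i))^2) \<ge> 0" for x :: "complex^'n"
    using assms by (intro sum_nonneg mult_nonneg_nonneg) (simp_all add: less_imp_le)
  have pos: "positive_mat (dg p)" unfolding positive_mat_def Let_def
  proof (intro conjI allI adj)
    fix x :: "complex^'n"
    show "Im (\<Sum>i\<in>UNIV. cnj (x $ i) * (dg p *v x) $ i) = 0" by (simp only: q Im_complex_of_real)
    show "Re (\<Sum>i\<in>UNIV. cnj (x $ i) * (dg p *v x) $ i) \<ge> 0" by (simp only: q Re_complex_of_real nn)
  qed
  have dg1: "dg (\<lambda>m. 1) = mat 1" unfolding dg_def mat_def of_real_1 by (rule refl)
  have e1: "(\<lambda>m. p m * (1 / p m)) = (\<lambda>m. 1)" "(\<lambda>m. (1 / p m) * p m) = (\<lambda>m. 1)"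
  proof -
    have pz: "p m \<noteq> 0" for m using assms[of m] by simp
    show "(\<lambda>m. p m * (1 / p m)) = (\<lambda>m. 1)" "(\<lambda>m. (1 / p m) * p m) = (\<lambda>m. 1)"
      by (simp_all add: fun_eq_iff pz)
  qed
  have i1: "dg p ** dg (\<lambda>m. 1 / p m) = mat 1" by (simp only: dg_mult e1 dg1)
  have i2: "dg (\<lambda>m. 1 / p m) ** dg p = mat 1" by (simp only: dg_mult e1 dg1)
  have "invertible (dg p)" unfolding invertible_def using i1 i2 by (intro exI conjI)
  then show ?thesis using pos unfolding pos_invertible_def mem_Collect_eq by blast
qed

lemma entry_close: fixes M P :: "complex^'n::finite^'n" shows "dist M P < \<delta> \<Longrightarrow> cmod (M$k$l - P$k$l) < (\<delta>::real)"
proof -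
  assume "dist M P < \<delta>"
  moreover have "cmod ((M - P)$k$l) \<le> norm (M - P)"
  proof -
    have "cmod ((M - P)$k$l) \<le> norm ((M-P)$k)" by (rule Finite_Cartesian_Product.norm_nth_le)
    also have "\<dots> \<le> norm (M - P)" by (rule Finite_Cartesian_Product.norm_nth_le)
    finally show ?thesis .
  qed
  ultimately show ?thesis by (simp add: dist_norm)
qed

lemma approx:
  assumes "logmodular A" "\<And>m. p m > 0" "\<delta> > 0"
  shows "\<exists>a\<in>inv_in A. \<forall>k l. cmod ((cadj a ** a)$k$l - dg p $k$l) < \<delta>"
proof -
  have sub: "pos_invertible \<subseteq> closure {cadj a ** a | a. a \<in> inv_in A}"
    using assms(1) unfolding logmodular_def by (rule conjunct2)
  have "dg p \<in> closure {cadj a ** a | a. a \<in> inv_in A}"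
    using sub dg_posinv[OF assms(2)] by (rule subsetD)
  then obtain M where M: "M \<in> {cadj a ** a | a. a \<in> inv_in A}" "dist M (dg p) < \<delta>"
    using assms(3) unfolding closure_approachable by meson
  from M(1) obtain a where a: "a \<in> inv_in A" "M = cadj a ** a" by blast
  show ?thesis
  proof (rule bexI[OF _ a(1)], intro allI)
    fix k l
    show "cmod ((cadj a ** a)$k$l - dg p $k$l) < \<delta>" using entry_close[OF M(2)] a(2) by simp
  qed
qed



lemma closed_A: "logmodular A \<Longrightarrow> closed A"
  unfolding logmodular_def using closed_subspace subspace_A by blast

lemma cnbound: "cmod (c$r$s) \<le> 2" if "cn c s \<le> 4" for c :: "complex^'n::finite^'n"
  using sq_le4[OF norm_ge_zero] entry_le_cn[of c r s] that by (meson order_trans)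

lemma rnbound: "cmod (c$r$s) \<le> 2" if "rn c r \<le> 4" for c :: "complex^'n::finite^'n"
  using sq_le4[OF norm_ge_zero] entry_le_rn[of c r s] that by (meson order_trans)

lemma col_part:
  fixes A :: "(complex^'n::finite^'n) set"
  assumes lm: "logmodular A"
  shows "\<exists>c\<in>A. (\<forall>r s. s \<noteq> j \<longrightarrow> c$r$s = 0) \<and> (\<exists>r. c$r$j \<noteq> 0)"
proof -
  define n where "n = real CARD('n)"
  have n1: "n \<ge> 1" unfolding n_def by simp
  define g where "g c = (\<Sum>s\<in>UNIV-{j}. cn c s)" for c :: "complex^'n^'n"
  have "\<exists>c\<in>A. g c = 0 \<and> 1/2 \<le> cn c j"
  proof (rule limit_arg[where R = "2 * real CARD('n) * real CARD('n)"])
    show "closed A" using closed_A[OF lm] .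
    show "continuous_on UNIV g" unfolding g_def by (intro continuous_on_sum cont_cn)
    show "continuous_on UNIV (\<lambda>c. cn c j)" by (rule cont_cn)
    show "g c \<ge> 0" for c unfolding g_def by (intro sum_nonneg cn_nonneg)
    fix e :: real assume e: "e > 0"
    define \<delta> where "\<delta> = min (e/(2*n)) (1/4)"
    have d0: "\<delta> > 0" using e n1 by (simp add: \<delta>_def)
    define p where "p m = (if m = j then 1 else \<delta>)" for m
    have p0: "p m > 0" for m using d0 by (simp add: p_def)
    obtain a where a: "a \<in> inv_in A" "\<forall>k l. cmod ((cadj a ** a)$k$l - dg p $k$l) < \<delta>"
      using approx[where p=p, OF lm p0 d0] by blast
    have ck: "\<bar>cn a k - p k\<bar> < \<delta>" for k
    proof -
      have "cmod (complex_of_real (cn a k) - complex_of_real (p k)) < \<delta>"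
        using a(2)[rule_format, of k k] by (simp add: gram_diag dg_def)
      then show ?thesis by (simp only: of_real_diff[symmetric] norm_of_real)
    qed
    have dq: "\<delta> \<le> 1/4" by (simp add: \<delta>_def)
    have p1: "p k \<le> 1" for k using dq by (simp add: p_def)
    have cn2: "cn a k \<le> 4" for k using ck[of k] dq p1[of k] by (simp add: abs_less_iff)
    have cnj: "cn a j \<ge> 1/2" using ck[of j] dq by (simp add: p_def abs_less_iff)
    have cnk: "cn a k \<le> e / n" if "k \<noteq> j" for k
    proof -
      have "cn a k < 2 * \<delta>" using ck[of k] that by (simp add: p_def)
      also have "\<dots> \<le> e / n" using n1 by (simp add: \<delta>_def)
      finally show ?thesis by simp
    qed
    have "g a \<le> real (card (UNIV - {j} :: 'n set)) * (e / n)"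
      unfolding g_def by (rule sum_bounded_above) (use cnk in auto)
    also have "\<dots> \<le> n * (e / n)"
      unfolding n_def using e n1 by (intro mult_right_mono) (auto intro: card_mono simp: n_def)
    also have "\<dots> = e" using n1 by simp
    finally have ge: "g a \<le> e" .
    have "norm a \<le> 2 * real CARD('n) * real CARD('n)"
      by (rule norm_mat_bound) (rule cnbound[OF cn2])
    moreover have "a \<in> A" using a(1) by (simp add: inv_in_def)
    ultimately show "\<exists>c\<in>A. norm c \<le> 2 * real CARD('n) * real CARD('n) \<and> g c \<le> e \<and> 1/2 \<le> cn c j"
      using ge cnj by blast
  qed
  then obtain c where c: "c \<in> A" "g c = 0" "1/2 \<le> cn c j" by blast
  have z: "cn c s = 0" if "s \<noteq> j" for s
    using c(2) that unfolding g_def by (subst (asm) sum_nonneg_eq_0_iff) (auto intro: cn_nonneg)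
  have "c$r$s = 0" if "s \<noteq> j" for r s
    using entry_le_cn[of c r s] z[OF that] by simp
  moreover have "\<exists>r. c$r$j \<noteq> 0"
  proof (rule ccontr)
    assume "\<not> ?thesis"
    then have "cn c j = 0" by (simp add: cn_def)
    then show False using c(3) by simp
  qed
  ultimately show ?thesis using c(1) by blast
qed


lemma real_bound:
  fixes N x e n :: real
  assumes "N * x^2 \<le> 4" "N = 4*n^2/e^2 + 1" "e > 0" "n \<ge> 1" "x \<ge> 0"
  shows "x \<le> e / n"
proof -
  define t where "t = (e/n)^2"
  have t0: "t > 0" using assms by (simp add: t_def)
  have Nt: "N = 4 / t + 1" using assms(2) by (simp add: t_def power_divide)
  have N0: "N > 0" using Nt t0 by (simp add: add_pos_pos)
  have tN: "t * N = 4 + t" using t0 unfolding Nt by (simp add: distrib_left)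
  have "x^2 * N \<le> t * N" using assms(1) tN t0 by (simp add: mult.commute)
  then have "x^2 \<le> t" using N0 by (rule mult_right_le_imp_le)
  moreover have "0 \<le> e / n" using assms(3,4) by simp
  ultimately show ?thesis unfolding t_def by (rule power2_le_imp_le)
qed

lemma row_part:
  fixes A :: "(complex^'n::finite^'n) set"
  assumes lm: "logmodular A"
  shows "\<exists>c\<in>A. (\<forall>r s. r \<noteq> i \<longrightarrow> c$r$s = 0) \<and> (\<exists>s. c$i$s \<noteq> 0)"
proof -
  define n where "n = real CARD('n)"
  have n1: "n \<ge> 1" unfolding n_def by simp
  define g where "g c = (\<Sum>r\<in>UNIV-{i}. rn c r)" for c :: "complex^'n^'n"
  have "\<exists>c\<in>A. g c = 0 \<and> 1/2 \<le> rn c i"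
  proof (rule limit_arg[where R = "2 * real CARD('n) * real CARD('n)"])
    show "closed A" using closed_A[OF lm] .
    show "continuous_on UNIV g" unfolding g_def by (intro continuous_on_sum cont_rn)
    show "continuous_on UNIV (\<lambda>c. rn c i)" by (rule cont_rn)
    show "g c \<ge> 0" for c unfolding g_def by (intro sum_nonneg rn_nonneg)
    fix e :: real assume e: "e > 0"
    define \<delta> where "\<delta> = 1 / (2 * n)"
    have d0: "\<delta> > 0" using n1 by (simp add: \<delta>_def)
    have dn: "\<delta> * real CARD('n) \<le> 1/2" using n1 by (simp add: \<delta>_def n_def)
    define N where "N = 4 * n^2 / e^2 + 1"
    have N1: "N \<ge> 1" using e by (simp add: N_def)
    define p where "p m = (if m = i then 1 else N)" for m
    have p0: "p m > 0" for m using N1 by (simp add: p_def)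
    have p1: "\<forall>m. p m \<ge> 1" using N1 by (simp add: p_def)
    obtain a where a: "a \<in> inv_in A" "\<forall>k l. cmod ((cadj a ** a)$k$l - dg p $k$l) < \<delta>"
      using approx[where p=p, OF lm p0 d0] by blast
    obtain b where b: "b \<in> A" "a ** b = mat 1" "b ** a = mat 1"
      using a(1) unfolding inv_in_def by blast
    have close: "\<forall>m m'. cmod ((cadj a ** a)$m$m' - (if m = m' then of_real (p m) else 0)) \<le> \<delta>"
    proof (intro allI)
      fix m m'
      have dgE: "dg p $m$m' = (if m = m' then of_real (p m) else 0)" by (simp add: dg_def)
      show "cmod ((cadj a ** a)$m$m' - (if m = m' then of_real (p m) else 0)) \<le> \<delta>"
        using a(2)[rule_format, of m m'] unfolding dgE by (rule less_imp_le)
    qed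
    have est: "rn b k \<le> 2 \<and> p k * (rn b k)^2 \<le> 4 \<and> (p k = 1 \<longrightarrow> rn b k \<ge> 1/2)" for k
      by (rule row_est[OF b(2) b(3) close p1 dn])
    have rnk: "rn b k \<le> e / n" if "k \<noteq> i" for k
    proof -
      have "N * (rn b k)^2 \<le> 4" using est[of k] that by (simp add: p_def)
      then show ?thesis using real_bound[OF _ N_def e n1 rn_nonneg] by blast
    qed
    have "g b \<le> real (card (UNIV - {i} :: 'n set)) * (e / n)"
      unfolding g_def by (rule sum_bounded_above) (use rnk in auto)
    also have "\<dots> \<le> n * (e / n)"
      unfolding n_def using e n1 by (intro mult_right_mono) (auto intro: card_mono simp: n_def)
    also have "\<dots> = e" using n1 by simp
    finally have ge: "g b \<le> e" .
    have "norm b \<le> 2 * real CARD('n) * real CARD('n)"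
    proof (rule norm_mat_bound)
      fix r s
      have "rn b r \<le> 4" using est[of r] by linarith
      then show "cmod (b$r$s) \<le> 2" by (rule rnbound)
    qed
    moreover have "rn b i \<ge> 1/2" using est[of i] by (simp add: p_def)
    ultimately show "\<exists>c\<in>A. norm c \<le> 2 * real CARD('n) * real CARD('n) \<and> g c \<le> e \<and> 1/2 \<le> rn c i"
      using ge b(1) by blast
  qed
  then obtain c where c: "c \<in> A" "g c = 0" "1/2 \<le> rn c i" by blast
  have z: "rn c r = 0" if "r \<noteq> i" for r
    using c(2) that unfolding g_def by (subst (asm) sum_nonneg_eq_0_iff) (auto intro: rn_nonneg)
  have "c$r$s = 0" if "r \<noteq> i" for r s
    using entry_le_rn[of c r s] z[OF that] by simp
  moreover have "\<exists>s. c$i$s \<noteq> 0"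
  proof (rule ccontr)
    assume "\<not> ?thesis"
    then have "rn c i = 0" by (simp add: rn_def)
    then show False using c(3) by simp
  qed
  ultimately show ?thesis using c(1) by blast
qed



lemma row_sum:
  fixes c :: "complex^'n::finite^'n"
  assumes "\<forall>r s. r \<noteq> i \<longrightarrow> c$r$s = 0"
  shows "(\<Sum>k\<in>UNIV. cscale (c$i$k) (matrix_unit i k)) = c"
proof -
  have "(\<Sum>k\<in>UNIV. cscale (c$i$k) (matrix_unit i k))$r$s = c$r$s" for r s
  proof -
    have "(\<Sum>k\<in>UNIV. cscale (c$i$k) (matrix_unit i k))$r$s
        = (\<Sum>k\<in>UNIV. if k = s then (if r = i then c$i$k else 0) else 0)"
      unfolding sum_component by (rule sum.cong) (auto simp: cscale_def matrix_unit_def)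
    also have "\<dots> = c$r$s" using assms by auto
    finally show ?thesis .
  qed
  then show ?thesis by (simp add: vec_eq_iff)
qed

lemma col_sum:
  fixes c :: "complex^'n::finite^'n"
  assumes "\<forall>r s. s \<noteq> j \<longrightarrow> c$r$s = 0"
  shows "(\<Sum>k\<in>UNIV. cscale (c$k$j) (matrix_unit k j)) = c"
proof -
  have "(\<Sum>k\<in>UNIV. cscale (c$k$j) (matrix_unit k j))$r$s = c$r$s" for r s
  proof -
    have "(\<Sum>k\<in>UNIV. cscale (c$k$j) (matrix_unit k j))$r$s
        = (\<Sum>k\<in>UNIV. if k = r then (if s = j then c$k$j else 0) else 0)"
      unfolding sum_component by (rule sum.cong) (auto simp: cscale_def matrix_unit_def)
    also have "\<dots> = c$r$s" using assms by auto
    finally show ?thesis .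
  qed
  then show ?thesis by (simp add: vec_eq_iff)
qed

theorem lemma1:
  fixes A :: "(complex^'n::finite^'n) set"
  assumes "logmodular A"
  shows "\<exists>\<alpha> \<beta> :: 'n \<Rightarrow> 'n \<Rightarrow> complex.
           (\<forall>i. \<exists>k. \<alpha> i k \<noteq> 0) \<and> (\<forall>j. \<exists>k. \<beta> k j \<noteq> 0) \<and>
           (\<forall>i j. (\<Sum>k\<in>UNIV. cscale (\<alpha> i k) (matrix_unit i k)) \<in> A \<and>
                  (\<Sum>k\<in>UNIV. cscale (\<beta> k j) (matrix_unit k j)) \<in> A)"
proof -
  have "\<forall>i. \<exists>c. c \<in> A \<and> (\<forall>r s. r \<noteq> i \<longrightarrow> c$r$s = 0) \<and> (\<exists>s. c$i$s \<noteq> 0)"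
    using row_part[OF assms] by blast
  then obtain R where R:
    "\<forall>i. R i \<in> A \<and> (\<forall>r s. r \<noteq> i \<longrightarrow> R i$r$s = 0) \<and> (\<exists>s. R i$i$s \<noteq> 0)" by metis
  have "\<forall>j. \<exists>c. c \<in> A \<and> (\<forall>r s. s \<noteq> j \<longrightarrow> c$r$s = 0) \<and> (\<exists>r. c$r$j \<noteq> 0)"
    using col_part[OF assms] by blast
  then obtain C where C:
    "\<forall>j. C j \<in> A \<and> (\<forall>r s. s \<noteq> j \<longrightarrow> C j$r$s = 0) \<and> (\<exists>r. C j$r$j \<noteq> 0)" by metis
  show ?thesis
  proof (rule exI[where x="\<lambda>i k. R i $ i $ k"], rule exI[where x="\<lambda>k j. C j $ k $ j"],
         intro conjI allI)
    fix i j
    show "\<exists>k. R i $ i $ k \<noteq> 0" using R by blast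
    show "\<exists>k. C j $ k $ j \<noteq> 0" using C by blast
  next
    fix i j
    show "(\<Sum>k\<in>UNIV. cscale (R i $ i $ k) (matrix_unit i k)) \<in> A"
      using row_sum[of i "R i"] R by simp
    show "(\<Sum>k\<in>UNIV. cscale (C j $ k $ j) (matrix_unit k j)) \<in> A"
      using col_sum[of j "C j"] C by simp
  qed
qed


end
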